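(* Let $m\in\mathbb{N}$ and let $A,B$ be finite (nonempty) sequences of positive integers. If $A$ and $B$ are $m$-palindromes, then the concatenation $ABA$ is an $m$-palindrome.
   Context: For a finite sequence $(c_0,\dots,c_k)$ of positive integers, $[c_0,\dots,c_k]$ denotes the value of the finite continued fraction $c_0+\cfrac{1}{c_1+\cfrac{1}{\ddots+\cfrac{1}{c_k}}}$. A finite sequence $(c_0,\dots,c_k)$ of positive integers is an $m$-palindrome ($m\in\mathbb{N}$) if $[c_0,\dots,c_k]=m\,[c_k,\dots,c_0]$. *)

theory Defs
  imports Complex_Main
begin

text \<open>Value of the finite continued fraction [c0, ..., ck]; the empty list is not
  a valid continued fraction (value 0 by convention, never used).\<close>
fun cf :: "nat list \<Rightarrow> real" where
  "cf [] = 0"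
| "cf [c] = real c"
| "cf (c # d # cs) = real c + 1 / cf (d # cs)"

definition pos_seq :: "nat list \<Rightarrow> bool" where
  "pos_seq cs \<longleftrightarrow> cs \<noteq> [] \<and> (\<forall>c \<in> set cs. c > 0)"

definition m_palindrome :: "nat \<Rightarrow> nat list \<Rightarrow> bool" where
  "m_palindrome m cs \<longleftrightarrow> pos_seq cs \<and> cf cs = real m * cf (rev cs)"

end

theory Submission
  imports Defs
begin

fun mm :: "nat\<times>nat\<times>nat\<times>nat \<Rightarrow> nat\<times>nat\<times>nat\<times>nat \<Rightarrow> nat\<times>nat\<times>nat\<times>nat" where
  "mm (a,b,c,d) (e,f,g,h) = (a*e+b*g, a*f+b*h, c*e+d*g, c*f+d*h)"

fun tr :: "nat\<times>nat\<times>nat\<times>nat \<Rightarrow> nat\<times>nat\<times>nat\<times>nat" where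
  "tr (a,b,c,d) = (a,c,b,d)"

fun M :: "nat list \<Rightarrow> nat\<times>nat\<times>nat\<times>nat" where
  "M [] = (1,0,0,1)"
| "M (x#xs) = mm (x,1,1,0) (M xs)"

lemma mm_assoc: "mm (mm X Y) Z = mm X (mm Y Z)"
  by (cases X; cases Y; cases Z) (simp add: algebra_simps)

lemma mm_id[simp]: "mm (Suc 0,0,0,Suc 0) X = X"
  by (cases X) simp

lemma M_append: "M (xs @ ys) = mm (M xs) (M ys)"
  by (induction xs) (simp_all add: mm_id mm_assoc)

lemma tr_mm: "tr (mm X Y) = mm (tr Y) (tr X)"
  by (cases X; cases Y) (simp add: algebra_simps)

lemma M_rev: "M (rev xs) = tr (M xs)"
proof (induction xs)
  case Nil then show ?case by simp
next
  case (Cons x xs)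
  have "M (rev (x#xs)) = mm (M (rev xs)) (M [x])" by (simp add: M_append)
  also have "\<dots> = mm (tr (M xs)) (tr (x,1,1,0))" using Cons by simp
  also have "\<dots> = tr (M (x#xs))" by (simp add: tr_mm)
  finally show ?case .
qed

lemma M_cf: "xs \<noteq> [] \<Longrightarrow> \<forall>c\<in>set xs. c > 0 \<Longrightarrow> M xs = (a,b,c,d) \<Longrightarrow>
   a > 0 \<and> c > 0 \<and> cf xs = real a / real c"
proof (induction xs arbitrary: a b c d)
  case Nil then show ?case by simp
next
  case (Cons x xs)
  show ?case
  proof (cases xs)
    case Nil
    then show ?thesis using Cons.prems by auto
  next
    case (Cons y ys)
    obtain a1 b1 c1 d1 where e: "M xs = (a1,b1,c1,d1)" by (cases "M xs") auto
    have ih: "a1 > 0 \<and> c1 > 0 \<and> cf xs = real a1 / real c1"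
      using Cons.IH[OF _ _ e] Cons.prems Cons by auto
    have "M (x#xs) = (x*a1 + c1, x*b1+d1, a1, b1)" using e by simp
    then have abc: "a = x*a1 + c1" "c = a1" using Cons.prems by auto
    have "cf (x#xs) = real x + 1 / cf xs" using Cons by simp
    also have "\<dots> = real a / real c" using ih abc by (simp add: field_simps)
    finally show ?thesis using ih abc by simp
  qed
qed

lemma pal_iff:
  assumes "pos_seq xs" "M xs = (a,b,c,d)"
  shows "m_palindrome m xs \<longleftrightarrow> b = m * c"
proof -
  have h1: "a > 0 \<and> c > 0 \<and> cf xs = real a / real c"
    using M_cf assms unfolding pos_seq_def by blast
  have "M (rev xs) = (a,c,b,d)" using assms M_rev by simp
  then have h2: "a > 0 \<and> b > 0 \<and> cf (rev xs) = real a / real b"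
    using M_cf[of "rev xs" a c b d] assms unfolding pos_seq_def by auto
  have "(real a / real c = real m * (real a / real b)) \<longleftrightarrow> real b = real m * real c"
    using h1 h2 by (auto simp: field_simps)
  also have "\<dots> \<longleftrightarrow> b = m * c" by (metis of_nat_eq_iff of_nat_mult)
  finally show ?thesis using assms h1 h2 unfolding m_palindrome_def by simp
qed

theorem lemma3p9:
  fixes m :: nat and A B :: "nat list"
  assumes "m_palindrome m A" and "m_palindrome m B"
  shows "m_palindrome m (A @ B @ A)"
proof -
  have pA: "pos_seq A" and pB: "pos_seq B" using assms unfolding m_palindrome_def by auto
  have pABA: "pos_seq (A @ B @ A)" using pA pB unfolding pos_seq_def by auto
  obtain a b c d where eA: "M A = (a,b,c,d)" by (cases "M A") auto
  obtain e f g h where eB: "M B = (e,f,g,h)" by (cases "M B") auto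
  have bA: "b = m*c" using pal_iff[OF pA eA] assms(1) by simp
  have bB: "f = m*g" using pal_iff[OF pB eB] assms(2) by simp
  obtain p q r s where eABA: "M (A @ B @ A) = (p,q,r,s)" by (cases "M (A @ B @ A)") auto
  have "M (A @ B @ A) = mm (a,m*c,c,d) (mm (e,m*g,g,h) (a,m*c,c,d))"
    using eA eB bA bB by (simp add: M_append)
  then have "q = m * r" using eABA by (simp add: algebra_simps)
  then show ?thesis using pal_iff[OF pABA eABA] by simp
qed

end
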